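(* Let $r>0$ and $d>0$ with $d\sqrt{2}<r$, and let $X\subseteq\mathbb{R}^2$ be a bounded $r$-regular set whose boundary $\partial X$ contains no point of the grid $d\mathbb{Z}^2$. Let $I$ be the digital image of $X$ by the lattice $d\mathbb{Z}^2$. Then one may construct from $I$ (i.e. as a function of the image $I$ alone) a set $\Gamma\subseteq\mathbb{R}^2$ such that $d_H(\partial\Gamma,\partial X)<d$.
   Context: A closed set $X\subseteq\mathbb{R}^2$ is $r$-regular if for each $x\in\partial X$ there are two open balls of radius $r$, $B_r(x_b)\subseteq X$ and $B_r(x_w)\subseteq \mathbb{R}^2\setminus X$, with $\overline{B_r(x_b)}\cap\overline{B_r(x_w)}=\{x\}$. The pixels of the lattice $d\mathbb{Z}^2$ are the closed squares $[dk,d(k+1)]\times[dl,d(l+1)]$, $k,l\in\mathbb{Z}$. The digital image of $X$ assigns to each pixel $C$ the intensity $\lambda=\phi(\mathrm{area}(X\cap C)/d^2)$, where $\phi:[0,1]\to[0,1]$ is a fixed monotonic function with $\phi(0)=0$, $\phi(1)=1$, $\phi((0,1))\subseteq(0,1)$. The Hausdorff distance is $d_H(Y,Z)=\max\{\sup_{y\in Y}\inf_{z\in Z}\|y-z\|,\ \sup_{z\in Z}\inf_{y\in Y}\|y-z\|\}$. *)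

theory Defs
  imports "HOL-Analysis.Analysis"
begin

definition r_regular :: "real \<Rightarrow> (real \<times> real) set \<Rightarrow> bool" where
  "r_regular r X \<longleftrightarrow> closed X \<and>
     (\<forall>x\<in>frontier X. \<exists>xb xw. ball xb r \<subseteq> X \<and> ball xw r \<subseteq> - X \<and>
        closure (ball xb r) \<inter> closure (ball xw r) = {x})"

definition pixel :: "real \<Rightarrow> int \<Rightarrow> int \<Rightarrow> (real \<times> real) set" where
  "pixel d k l = cbox (d * of_int k, d * of_int l) (d * of_int (k + 1), d * of_int (l + 1))"

definition digital_image ::
  "real \<Rightarrow> (real \<Rightarrow> real) \<Rightarrow> (real \<times> real) set \<Rightarrow> (int \<times> int \<Rightarrow> real)" where
  "digital_image d \<phi> X = (\<lambda>(k, l). \<phi> (measure lebesgue (X \<inter> pixel d k l) / d\<^sup>2))"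

text \<open>Hausdorff distance, literally as sup/inf in the extended reals
  (so the empty-set conventions are sup {} = -\<infinity>, inf {} = +\<infinity>).\<close>
definition hausdorff_dist :: "(real \<times> real) set \<Rightarrow> (real \<times> real) set \<Rightarrow> ereal" where
  "hausdorff_dist Y Z = max (SUP y\<in>Y. INF z\<in>Z. ereal (dist y z))
                            (SUP z\<in>Z. INF y\<in>Y. ereal (dist y z))"

end

theory Submission
  imports Defs
begin

lemma pixel_measure:
  assumes "d > 0"
  shows "measure lebesgue (pixel d k l) = d\<^sup>2"
proof -
  have "measure lebesgue (pixel d k l) = measure lborel (pixel d k l)"
    unfolding pixel_def by (rule measure_completion) simp
  also have "\<dots> = d\<^sup>2"
    using assms unfolding pixel_def measure_lborel_cbox_eq
    by (simp add: Basis_prod_def power2_eq_square algebra_simps)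
  finally show ?thesis .
qed

lemma pixel_lmeas: "pixel d k l \<in> lmeasurable"
  unfolding pixel_def by (rule lmeasurable_cbox)

lemma open_null_empty:
  assumes "open S" "S \<subseteq> T" "T \<in> lmeasurable" "measure lebesgue T = 0"
  shows "S = {}"
  using assms negligible_iff_measure negligible_subset open_not_negligible by metis

lemma pixel_interior: "interior (pixel d k l) = box (d * of_int k, d * of_int l) (d * of_int (k + 1), d * of_int (l + 1))"
  unfolding pixel_def by simp

lemma pixel_closure_box:
  assumes "d > 0"
  shows "closure (box (d * of_int k, d * of_int l) (d * of_int (k + 1), d * of_int (l + 1))) = pixel d k l"
proof -
  have "box (d * of_int k, d * of_int l) (d * of_int (k + 1), d * of_int (l + 1)) \<noteq> {}"
    using assms by (simp add: box_ne_empty Basis_prod_def)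
  then show ?thesis unfolding pixel_def by simp
qed

lemma M1:
  assumes "d > 0" "closed X" "measure lebesgue (X \<inter> pixel d k l) = 0"
  shows "pixel d k l \<inter> interior X = {}"
proof -
  let ?B = "box (d * of_int k, d * of_int l) (d * of_int (k + 1), d * of_int (l + 1))"
  have "?B \<inter> interior X = {}"
  proof (rule open_null_empty[OF _ _ _ assms(3)])
    show "open (?B \<inter> interior X)" by auto
    show "?B \<inter> interior X \<subseteq> X \<inter> pixel d k l"
      using interior_subset box_subset_cbox unfolding pixel_def by blast
    show "X \<inter> pixel d k l \<in> lmeasurable"
      by (rule lmeasurable_compact) (simp add: pixel_def assms(2) closed_Int_compact)
  qed
  then have "closure ?B \<inter> interior X = {}"
    by (metis Int_commute open_Int_closure_eq_empty open_interior)
  then show ?thesis using pixel_closure_box[OF assms(1)] by simp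
qed

lemma M2:
  assumes "d > 0" "closed X" "measure lebesgue (X \<inter> pixel d k l) = d\<^sup>2"
  shows "pixel d k l \<subseteq> X"
proof -
  let ?B = "box (d * of_int k, d * of_int l) (d * of_int (k + 1), d * of_int (l + 1))"
  have XP: "X \<inter> pixel d k l \<in> lmeasurable"
    by (rule lmeasurable_compact) (simp add: pixel_def assms(2) closed_Int_compact)
  have eq: "pixel d k l - X = pixel d k l - (X \<inter> pixel d k l)" by blast
  have m0: "measure lebesgue (pixel d k l - X) = 0"
    unfolding eq using measurable_measure_Diff[OF pixel_lmeas, of "X \<inter> pixel d k l" d k l] XP
    pixel_measure[OF assms(1)] assms(3) by (simp add: fmeasurable_def)
  have "?B - X = {}"
  proof (rule open_null_empty[OF _ _ _ m0])
    show "open (?B - X)" using assms(2) by auto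
    show "?B - X \<subseteq> pixel d k l - X"
      using box_subset_cbox unfolding pixel_def by blast
    show "pixel d k l - X \<in> lmeasurable"
      using pixel_lmeas assms(2) by (intro fmeasurable_Diff pixel_lmeas sets_completionI_sets) (simp_all add: borel_closed)
  qed
  then have "closure ?B \<subseteq> X" using assms(2) by (simp add: closure_minimal)
  then show ?thesis using pixel_closure_box[OF assms(1)] by simp
qed

lemma nb1:
  fixes a d :: real
  assumes "d > 0"
  shows "\<exists>\<delta>>0. \<forall>b. \<bar>b - a\<bar> < \<delta> \<longrightarrow> (\<exists>k::int. d * of_int k \<le> a \<and> a \<le> d * of_int (k + 1) \<and> d * of_int k \<le> b \<and> b \<le> d * of_int (k + 1))"
proof -
  define f where "f = \<lfloor>a / d\<rfloor>"
  define c where "c = \<lceil>a / d\<rceil>"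
  have f1: "of_int f \<le> a / d" "a / d < of_int f + 1" unfolding f_def by linarith+
  have c1: "a / d \<le> of_int c" "of_int c - 1 < a / d" unfolding c_def by linarith+
  have f2: "d * of_int f \<le> a" "a < d * (of_int f + 1)" using f1 assms by (simp_all add: field_simps)
  have c2: "a \<le> d * of_int c" "d * (of_int c - 1) < a" using c1 assms by (simp_all add: field_simps)
  define \<delta> where "\<delta> = min (d * (of_int f + 1) - a) (a - d * (of_int c - 1))"
  have "\<delta> > 0" unfolding \<delta>_def using f2 c2 by simp
  moreover have "\<exists>k::int. d * of_int k \<le> a \<and> a \<le> d * of_int (k + 1) \<and> d * of_int k \<le> b \<and> b \<le> d * of_int (k + 1)"
    if "\<bar>b - a\<bar> < \<delta>" for b
  proof (cases "b \<ge> a")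
    case True
    then show ?thesis using that f2 unfolding \<delta>_def
      by (intro exI[of _ f]) (auto simp: algebra_simps)
  next
    case False
    then show ?thesis using that c2 unfolding \<delta>_def
      by (intro exI[of _ "c - 1"]) (auto simp: algebra_simps)
  qed
  ultimately show ?thesis by blast
qed

lemma mem_pixel: "z \<in> pixel d k l \<longleftrightarrow> d * of_int k \<le> fst z \<and> fst z \<le> d * of_int (k + 1) \<and> d * of_int l \<le> snd z \<and> snd z \<le> d * of_int (l + 1)"
  unfolding pixel_def by (cases z) (simp add: cbox_Pair_eq)

lemma nb2:
  fixes x :: "real \<times> real"
  assumes "d > 0"
  shows "\<exists>\<delta>>0. \<forall>z. dist z x < \<delta> \<longrightarrow> (\<exists>k l. x \<in> pixel d k l \<and> z \<in> pixel d k l)"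
proof -
  obtain \<delta>1 where d1: "\<delta>1 > 0" "\<forall>b. \<bar>b - fst x\<bar> < \<delta>1 \<longrightarrow> (\<exists>k::int. d * of_int k \<le> fst x \<and> fst x \<le> d * of_int (k + 1) \<and> d * of_int k \<le> b \<and> b \<le> d * of_int (k + 1))"
    using nb1[OF assms] by blast
  obtain \<delta>2 where d2: "\<delta>2 > 0" "\<forall>b. \<bar>b - snd x\<bar> < \<delta>2 \<longrightarrow> (\<exists>k::int. d * of_int k \<le> snd x \<and> snd x \<le> d * of_int (k + 1) \<and> d * of_int k \<le> b \<and> b \<le> d * of_int (k + 1))"
    using nb1[OF assms] by blast
  have "\<exists>k l. x \<in> pixel d k l \<and> z \<in> pixel d k l" if "dist z x < min \<delta>1 \<delta>2" for z
  proof -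
    have "\<bar>fst z - fst x\<bar> < \<delta>1"
      using dist_fst_le[of z x] that by (simp add: dist_real_def)
    then obtain k where "d * of_int k \<le> fst x \<and> fst x \<le> d * of_int (k + 1) \<and> d * of_int k \<le> fst z \<and> fst z \<le> d * of_int (k + 1)"
      using d1 by blast
    moreover have "\<bar>snd z - snd x\<bar> < \<delta>2"
      using dist_snd_le[of z x] that by (simp add: dist_real_def)
    then obtain l where "d * of_int l \<le> snd x \<and> snd x \<le> d * of_int (l + 1) \<and> d * of_int l \<le> snd z \<and> snd z \<le> d * of_int (l + 1)"
      using d2 by blast
    ultimately show ?thesis unfolding mem_pixel by blast
  qed
  then show ?thesis using d1 d2 by (intro exI[of _ "min \<delta>1 \<delta>2"]) auto
qed

lemma corner_in:
  assumes "d > 0" "x \<in> pixel d k1 l1" "x \<in> pixel d k2 l2"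
  shows "(d * of_int (max k1 k2), d * of_int (max l1 l2)) \<in> pixel d k1 l1 \<inter> pixel d k2 l2"
proof -
  have mx: "d * of_int (max a b) = max (d * of_int a) (d * of_int b)" for a b :: int
    using assms by (cases "a \<le> b") (auto simp: max_def)
  show ?thesis using assms unfolding Int_iff mem_pixel fst_conv snd_conv mx
    by (auto simp: algebra_simps)
qed

lemma partial_exists:
  assumes "d > 0" "r > 0" "r_regular r X" "x \<in> frontier X"
    and grid: "\<forall>k l :: int. (d * of_int k, d * of_int l) \<notin> frontier X"
  shows "\<exists>k l. x \<in> pixel d k l \<and> measure lebesgue (X \<inter> pixel d k l) \<noteq> 0
            \<and> measure lebesgue (X \<inter> pixel d k l) \<noteq> d\<^sup>2"
proof -
  have cl: "closed X" using assms(3) unfolding r_regular_def by blast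
  obtain xb xw where b: "ball xb r \<subseteq> X" "closure (ball xb r) \<inter> closure (ball xw r) = {x}"
    using assms(3,4) unfolding r_regular_def by blast
  have "ball xb r \<subseteq> interior X" using b(1) by (simp add: interior_maximal)
  then have xci: "x \<in> closure (interior X)" using b(2) closure_mono by blast
  have xcc: "x \<in> closure (- X)" using assms(4) by (simp add: frontier_def closure_complement)
  obtain \<delta> where \<delta>: "\<delta> > 0" "\<forall>z. dist z x < \<delta> \<longrightarrow> (\<exists>k l. x \<in> pixel d k l \<and> z \<in> pixel d k l)"
    using nb2[OF assms(1)] by blast
  obtain z where z: "z \<in> interior X" "dist z x < \<delta>" using xci \<delta>(1) closure_approachable by metis
  obtain k1 l1 where p1: "x \<in> pixel d k1 l1" "z \<in> pixel d k1 l1" using \<delta>(2) z(2) by blast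
  have m1: "measure lebesgue (X \<inter> pixel d k1 l1) \<noteq> 0"
    using M1[OF assms(1) cl, of k1 l1] p1 z by blast
  obtain w where w: "w \<in> - X" "dist w x < \<delta>" using xcc \<delta>(1) closure_approachable by metis
  obtain k2 l2 where p2: "x \<in> pixel d k2 l2" "w \<in> pixel d k2 l2" using \<delta>(2) w(2) by blast
  have m2: "measure lebesgue (X \<inter> pixel d k2 l2) \<noteq> d\<^sup>2"
    using M2[OF assms(1) cl, of k2 l2] p2 w by blast
  show ?thesis
  proof (rule ccontr)
    assume na: "\<not> ?thesis"
    then have f1: "pixel d k1 l1 \<subseteq> X" using M2[OF assms(1) cl] p1 m1 by blast
    have f2: "pixel d k2 l2 \<inter> interior X = {}" using na M1[OF assms(1) cl] p2 m2 by blast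
    let ?a = "(d * of_int (max k1 k2), d * of_int (max l1 l2))"
    have "?a \<in> pixel d k1 l1 \<inter> pixel d k2 l2" using corner_in[OF assms(1) p1(1) p2(1)] .
    then have "?a \<in> frontier X" using f1 f2 cl by (auto simp: frontier_def)
    then show False using grid by blast
  qed
qed

lemma sq_le: "\<bar>u::real\<bar> \<le> c \<Longrightarrow> u\<^sup>2 \<le> c\<^sup>2"
  by (metis abs_ge_zero power2_abs power_mono)

definition cen :: "real \<Rightarrow> int \<Rightarrow> int \<Rightarrow> real \<times> real" where
  "cen d k l = (d * (of_int k + 1/2), d * (of_int l + 1/2))"

lemma cen_dist:
  assumes "d > 0" "y \<in> pixel d k l"
  shows "dist (cen d k l) y \<le> 3 * d / 4"
proof -
  have a: "\<bar>d * (of_int k + 1/2) - fst y\<bar> \<le> d / 2" "\<bar>d * (of_int l + 1/2) - snd y\<bar> \<le> d / 2"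
    using assms(2) unfolding mem_pixel abs_le_iff of_int_add of_int_1 distrib_left by auto
  have "(d * (of_int k + 1/2) - fst y)\<^sup>2 \<le> (d/2)\<^sup>2" "(d * (of_int l + 1/2) - snd y)\<^sup>2 \<le> (d/2)\<^sup>2"
    using a sq_le by blast+
  moreover have "(d/2)\<^sup>2 + (d/2)\<^sup>2 \<le> (3 * d / 4)\<^sup>2"
  proof -
    have "0 \<le> d\<^sup>2" by simp
    then show ?thesis by (simp add: power_divide power_mult_distrib)
  qed
  ultimately have sq: "(d * (of_int k + 1/2) - fst y)\<^sup>2 + (d * (of_int l + 1/2) - snd y)\<^sup>2 \<le> (3 * d / 4)\<^sup>2"
    by linarith
  have "sqrt ((d * (of_int k + 1/2) - fst y)\<^sup>2 + (d * (of_int l + 1/2) - snd y)\<^sup>2) \<le> 3 * d / 4"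
  proof -
    have "sqrt ((3 * d / 4)\<^sup>2) = 3 * d / 4" using assms(1) by simp
    then show ?thesis using real_sqrt_le_mono[OF sq] by simp
  qed
  then show ?thesis unfolding cen_def by (cases y) (simp add: dist_Pair_Pair dist_real_def)
qed

lemma cen_discrete:
  assumes "d > 0" "dist (cen d k l) (cen d k' l') < d"
  shows "cen d k l = cen d k' l'"
proof -
  have "\<bar>d * (of_int k + 1/2) - d * (of_int k' + 1/2)\<bar> < d"
    using dist_fst_le[of "cen d k l" "cen d k' l'"] assms(2) by (simp add: cen_def dist_real_def)
  moreover have "d * (of_int k + 1/2) - d * (of_int k' + 1/2) = d * (of_int k - of_int k')"
    by (simp add: algebra_simps)
  ultimately have "d * \<bar>of_int k - of_int k'\<bar> < d * 1" using assms(1)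
    by (simp add: abs_mult)
  then have "\<bar>of_int k - of_int k'\<bar> < (1::real)" using assms(1) by (simp only: mult_less_cancel_left_pos)
  then have k: "k = k'" by linarith
  have "\<bar>d * (of_int l + 1/2) - d * (of_int l' + 1/2)\<bar> < d"
    using dist_snd_le[of "cen d k l" "cen d k' l'"] assms(2) by (simp add: cen_def dist_real_def)
  moreover have "d * (of_int l + 1/2) - d * (of_int l' + 1/2) = d * (of_int l - of_int l')"
    by (simp add: algebra_simps)
  ultimately have "d * \<bar>of_int l - of_int l'\<bar> < d * 1" using assms(1)
    by (simp add: abs_mult)
  then have "\<bar>of_int l - of_int l'\<bar> < (1::real)" using assms(1) by (simp only: mult_less_cancel_left_pos)
  then have "l = l'" by linarith
  with k show ?thesis by simp
qed

lemma frontier_cen: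
  assumes "d > 0" "S \<subseteq> range (\<lambda>(k, l). cen d k l)"
  shows "frontier S = S"
proof -
  have disc: "\<forall>x\<in>S. \<forall>y\<in>S. dist y x < d \<longrightarrow> y = x"
  proof (intro ballI impI)
    fix x y assume xy: "x \<in> S" "y \<in> S" "dist y x < d"
    obtain k l where "x = cen d k l" using xy(1) assms(2) by auto
    moreover obtain k' l' where "y = cen d k' l'" using xy(2) assms(2) by auto
    ultimately show "y = x" using cen_discrete[OF assms(1)] xy(3) by blast
  qed
  have "closed S" by (rule discrete_imp_closed[OF assms(1) disc])
  moreover have "interior S = {}"
  proof (rule ccontr)
    assume "interior S \<noteq> {}"
    then obtain c where "c \<in> interior S" by blast
    then obtain e where e: "e > 0" "ball c e \<subseteq> S" by (meson mem_interior)
    define t where "t = min e d / 2"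
    have t: "t > 0" "t < e" "t < d" using e(1) assms(1) by (auto simp: t_def)
    define c' where "c' = (fst c + t, snd c)"
    have dc: "dist c' c = t" using t by (cases c) (simp add: c'_def dist_Pair_Pair dist_real_def)
    have "c' \<in> S" using e(2) dc t by (auto simp: dist_commute)
    moreover have "c \<in> S" using e by auto
    ultimately have "c' = c" using disc dc t by blast
    then show False using t by (cases c) (simp add: c'_def)
  qed
  ultimately show ?thesis by (simp add: frontier_def)
qed

lemma hd_le:
  assumes "\<forall>a\<in>A. \<exists>b\<in>B. dist a b \<le> e" "\<forall>b\<in>B. \<exists>a\<in>A. dist a b \<le> e"
  shows "hausdorff_dist A B \<le> ereal e"
  unfolding hausdorff_dist_def
proof (rule max.boundedI)
  show "(SUP y\<in>A. INF z\<in>B. ereal (dist y z)) \<le> ereal e"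
  proof (rule SUP_least)
    fix y assume "y \<in> A"
    then obtain z where "z \<in> B" "dist y z \<le> e" using assms(1) by blast
    then show "(INF z\<in>B. ereal (dist y z)) \<le> ereal e" by (intro INF_lower2) auto
  qed
  show "(SUP z\<in>B. INF y\<in>A. ereal (dist y z)) \<le> ereal e"
  proof (rule SUP_least)
    fix z assume "z \<in> B"
    then obtain y where "y \<in> A" "dist y z \<le> e" using assms(2) by blast
    then show "(INF y\<in>A. ereal (dist y z)) \<le> ereal e" by (intro INF_lower2) auto
  qed
qed

theorem theorem2p6:
  fixes r d :: real and \<phi> :: "real \<Rightarrow> real"
  assumes "r > 0" and "d > 0" and "d * sqrt 2 < r"
    and "mono_on {0..1} \<phi>" and "\<phi> 0 = 0" and "\<phi> 1 = 1"
    and "\<forall>t. 0 < t \<and> t < 1 \<longrightarrow> 0 < \<phi> t \<and> \<phi> t < 1"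
  shows "\<exists>F :: (int \<times> int \<Rightarrow> real) \<Rightarrow> (real \<times> real) set.
           \<forall>X. bounded X \<and> r_regular r X \<and>
               (\<forall>k l :: int. (d * of_int k, d * of_int l) \<notin> frontier X) \<longrightarrow>
               hausdorff_dist (frontier (F (digital_image d \<phi> X))) (frontier X) < ereal d"
proof (intro exI allI impI)
  fix X :: "(real \<times> real) set"
  assume H: "bounded X \<and> r_regular r X \<and> (\<forall>k l :: int. (d * of_int k, d * of_int l) \<notin> frontier X)"
  have cl: "closed X" using H unfolding r_regular_def by blast
  let ?I = "digital_image d \<phi> X"
  let ?S = "{cen d k l | k l. 0 < ?I (k, l) \<and> ?I (k, l) < 1}"
  have Iv: "?I (k, l) = \<phi> (measure lebesgue (X \<inter> pixel d k l) / d\<^sup>2)" for k l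
    by (simp add: digital_image_def)
  have fr: "frontier ?S = ?S"
  proof (rule frontier_cen[OF assms(2)], rule subsetI)
    fix a assume "a \<in> ?S"
    then obtain k l where "a = cen d k l" by blast
    then show "a \<in> range (\<lambda>(k, l). cen d k l)" by (auto intro: image_eqI[where x="(k, l)"])
  qed
  have mle: "0 \<le> measure lebesgue (X \<inter> pixel d k l) \<and> measure lebesgue (X \<inter> pixel d k l) \<le> d\<^sup>2" for k l
  proof -
    have "measure lebesgue (X \<inter> pixel d k l) \<le> measure lebesgue (pixel d k l)"
      by (rule measure_mono_fmeasurable) (auto intro: pixel_lmeas lmeasurable_compact
          simp: pixel_def cl closed_Int_compact)
    then show ?thesis using pixel_measure[OF assms(2)] by simp
  qed
  have d2: "d\<^sup>2 > 0" using assms(2) by simp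
  have A: "\<forall>a\<in>?S. \<exists>b\<in>frontier X. dist a b \<le> 3 * d / 4"
  proof
    fix a assume "a \<in> ?S"
    then obtain k l where a: "a = cen d k l" "0 < ?I (k, l)" "?I (k, l) < 1" by blast
    let ?m = "measure lebesgue (X \<inter> pixel d k l)"
    have "?m \<noteq> 0" using a(2) Iv assms(5) by force
    then have ne1: "pixel d k l \<inter> X \<noteq> {}" by (metis Int_commute measure_empty)
    have "?m \<noteq> d\<^sup>2" using a(3) Iv assms(6) d2 by force
    then have ne2: "pixel d k l - X \<noteq> {}" using pixel_measure[OF assms(2)]
      by (metis Diff_eq_empty_iff inf.absorb_iff2 Int_commute)
    have "connected (pixel d k l)" unfolding pixel_def by (simp add: convex_connected)
    then obtain y where "y \<in> pixel d k l \<inter> frontier X"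
      using connected_Int_frontier[OF _ ne1 ne2] by blast
    then show "\<exists>b\<in>frontier X. dist a b \<le> 3 * d / 4"
      using cen_dist[OF assms(2)] a(1) by blast
  qed
  have B: "\<forall>b\<in>frontier X. \<exists>a\<in>?S. dist a b \<le> 3 * d / 4"
  proof
    fix b assume b: "b \<in> frontier X"
    obtain k l where kl: "b \<in> pixel d k l" "measure lebesgue (X \<inter> pixel d k l) \<noteq> 0"
        "measure lebesgue (X \<inter> pixel d k l) \<noteq> d\<^sup>2"
      using partial_exists[OF assms(2,1)] H b by blast
    let ?t = "measure lebesgue (X \<inter> pixel d k l) / d\<^sup>2"
    have m1: "0 < measure lebesgue (X \<inter> pixel d k l)" using kl(2) mle[of k l] by linarith
    have m2: "measure lebesgue (X \<inter> pixel d k l) < d\<^sup>2" using kl(3) mle[of k l] by linarith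
    have "0 < ?t" using m1 d2 by simp
    moreover have "?t < 1" using m2 d2 by simp
    ultimately have "0 < ?t" "?t < 1" by auto
    then have "0 < ?I (k, l) \<and> ?I (k, l) < 1" using Iv assms(7) by simp
    then have "cen d k l \<in> ?S" by blast
    then show "\<exists>a\<in>?S. dist a b \<le> 3 * d / 4" using cen_dist[OF assms(2) kl(1)] by blast
  qed
  have "hausdorff_dist (frontier ?S) (frontier X) \<le> ereal (3 * d / 4)"
    unfolding fr by (rule hd_le[OF A B])
  also have "\<dots> < ereal d" using assms(2) by simp
  finally show "hausdorff_dist (frontier ((\<lambda>I. {cen d k l | k l. 0 < I (k, l) \<and> I (k, l) < 1}) ?I)) (frontier X) < ereal d"
    by simp
qed

end
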